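(* Let $(n_i)_{i\ge1}$ be a strictly increasing sequence of natural numbers and set $C=\bigcup_{i\ge1}[n_i,2n_i)$. Then there exist a set $D\subseteq\mathbb{N}$ of upper density $0$ and a binary function $h\in\mathscr{C}_{I_{\bar d=0}}$ such that $h[C\times D]=\mathbb{N}$.
   Context: $\mathbb{N}=\{0,1,2,\dots\}$. For $A\subseteq\mathbb{N}$, $\bar d(A)=\limsup_{n\to\infty}\frac{|A\cap[0,n)|}{n}$. $\mathscr{C}_{I_{\bar d=0}}$ is the set of all finitary functions $f:\mathbb{N}^k\to\mathbb{N}$ ($k\ge1$) such that $\bar d(f[A^k])=0$ whenever $\bar d(A)=0$. Intervals are intervals of natural numbers. *)

theory Defs
  imports "HOL-Analysis.Analysis"
begin

definition upper_density :: "nat set \<Rightarrow> ereal" where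
  "upper_density A = limsup (\<lambda>n. ereal (real (card (A \<inter> {0..<n})) / real n))"

(* a k-ary finitary function f : \<nat>^k \<rightarrow> \<nat>, represented as a function on lists,
   whose relevant inputs are the lists of length k; A^k = lists of length k over A *)
definition power_set_k :: "nat set \<Rightarrow> nat \<Rightarrow> nat list set" where
  "power_set_k A k = {xs. length xs = k \<and> set xs \<subseteq> A}"

definition in_C_Id0 :: "nat \<Rightarrow> (nat list \<Rightarrow> nat) \<Rightarrow> bool" where
  "in_C_Id0 k f \<longleftrightarrow> k \<ge> 1 \<and>
     (\<forall>A. upper_density A = 0 \<longrightarrow> upper_density (f ` power_set_k A k) = 0)"

definition binary_as_finitary :: "(nat \<Rightarrow> nat \<Rightarrow> nat) \<Rightarrow> nat list \<Rightarrow> nat" where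
  "binary_as_finitary h xs = h (xs ! 0) (xs ! 1)"

end

theory Submission
  imports Defs
begin


lemma dens0_tendsto:
  "upper_density A = 0 \<longleftrightarrow> (\<lambda>N. real (card (A \<inter> {0..<N})) / real N) \<longlonglongrightarrow> 0"
proof
  assume "(\<lambda>N. real (card (A \<inter> {0..<N})) / real N) \<longlonglongrightarrow> 0"
  hence "(\<lambda>N. ereal (real (card (A \<inter> {0..<N})) / real N)) \<longlonglongrightarrow> ereal 0"
    by simp
  hence "limsup (\<lambda>N. ereal (real (card (A \<inter> {0..<N})) / real N)) = ereal 0"
    by (rule lim_imp_Limsup[OF trivial_limit_sequentially])
  thus "upper_density A = 0" unfolding upper_density_def by (simp add: zero_ereal_def)
next
  assume a: "upper_density A = 0"
  let ?f = "\<lambda>N. ereal (real (card (A \<inter> {0..<N})) / real N)"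
  have ls: "limsup ?f = 0" using a unfolding upper_density_def .
  have "liminf ?f \<ge> 0"
    by (intro Liminf_bounded) auto
  moreover have "liminf ?f \<le> limsup ?f" by (rule Liminf_le_Limsup) simp
  ultimately have "liminf ?f = 0" using ls by simp
  hence "?f \<longlonglongrightarrow> 0" using Liminf_eq_Limsup[OF trivial_limit_sequentially _ ls] by simp
  thus "(\<lambda>N. real (card (A \<inter> {0..<N})) / real N) \<longlonglongrightarrow> 0"
    by (simp add: zero_ereal_def)
qed

lemma dens0_iff:
  "upper_density A = 0 \<longleftrightarrow> (\<forall>e>0. \<exists>M. \<forall>N\<ge>M. real (card (A \<inter> {0..<N})) \<le> e * real N)"
proof -
  have "(\<lambda>N. real (card (A \<inter> {0..<N})) / real N) \<longlonglongrightarrow> 0 \<longleftrightarrow>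
     (\<forall>e>0. \<exists>M. \<forall>N\<ge>M. real (card (A \<inter> {0..<N})) \<le> e * real N)"
  proof
    assume l: "(\<lambda>N. real (card (A \<inter> {0..<N})) / real N) \<longlonglongrightarrow> 0"
    show "\<forall>e>0. \<exists>M. \<forall>N\<ge>M. real (card (A \<inter> {0..<N})) \<le> e * real N"
    proof (intro allI impI)
      fix e :: real assume e: "e > 0"
      from l[unfolded LIMSEQ_iff, rule_format, OF e] obtain M where
        M: "\<forall>N\<ge>M. norm (real (card (A \<inter> {0..<N})) / real N - 0) < e" by blast
      show "\<exists>M. \<forall>N\<ge>M. real (card (A \<inter> {0..<N})) \<le> e * real N"
      proof (intro exI allI impI)
        fix N assume "N \<ge> M"
        with M have h: "real (card (A \<inter> {0..<N})) / real N < e" by simp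
        show "real (card (A \<inter> {0..<N})) \<le> e * real N"
        proof (cases "N = 0")
          case True thus ?thesis by simp
        next
          case False thus ?thesis using h by (simp add: divide_less_eq)
        qed
      qed
    qed
  next
    assume r: "\<forall>e>0. \<exists>M. \<forall>N\<ge>M. real (card (A \<inter> {0..<N})) \<le> e * real N"
    show "(\<lambda>N. real (card (A \<inter> {0..<N})) / real N) \<longlonglongrightarrow> 0"
      unfolding LIMSEQ_iff
    proof (intro allI impI)
      fix e :: real assume e: "e > 0"
      then obtain M where M: "\<forall>N\<ge>M. real (card (A \<inter> {0..<N})) \<le> e/2 * real N"
        using r[rule_format, of "e/2"] by auto
      show "\<exists>no. \<forall>N\<ge>no. norm (real (card (A \<inter> {0..<N})) / real N - 0) < e"
      proof (intro exI allI impI)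
        fix N assume N: "N \<ge> max M 1"
        hence "real (card (A \<inter> {0..<N})) \<le> e/2 * real N" using M by simp
        moreover have "real N > 0" using N by simp
        ultimately have "real (card (A \<inter> {0..<N})) / real N \<le> e/2"
          by (simp add: divide_le_eq)
        moreover have "real (card (A \<inter> {0..<N})) / real N \<ge> 0" by simp
        ultimately have "real (card (A \<inter> {0..<N})) / real N < e" using e by linarith
        thus "norm (real (card (A \<inter> {0..<N})) / real N - 0) < e" by simp
      qed
    qed
  qed
  thus ?thesis using dens0_tendsto by simp
qed



definition rho :: "(nat\<Rightarrow>nat) \<Rightarrow> nat \<Rightarrow> nat" where
  "rho n t = Max {j. n j \<le> t + n 1}"

primrec tt :: "(nat\<Rightarrow>nat) \<Rightarrow> nat \<Rightarrow> nat" where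
  "tt n 0 = 0"
| "tt n (Suc k) = tt n k + n (rho n (tt n k))"

definition ss :: "(nat\<Rightarrow>nat) \<Rightarrow> nat \<Rightarrow> nat" where
  "ss n k = n (rho n (tt n k))"

definition hh :: "(nat\<Rightarrow>nat) \<Rightarrow> nat \<Rightarrow> nat \<Rightarrow> nat" where
  "hh n x y = (let k = inv (tt n) y in
     if tt n k = y \<and> ss n k \<le> x \<and> x < 2 * ss n k then y + x - ss n k else y)"

context fixes n :: "nat \<Rightarrow> nat" assumes sm: "strict_mono n"
begin

lemma fin_rho: "finite {j. n j \<le> t + n 1}"
proof -
  have "{j. n j \<le> t + n 1} \<subseteq> {..t + n 1}"
    using strict_mono_imp_increasing[OF sm] by (auto intro: le_trans)
  thus ?thesis using finite_subset by blast
qed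

lemma rho_ge: "n j \<le> t + n 1 \<Longrightarrow> j \<le> rho n t"
  unfolding rho_def using fin_rho by (auto intro: Max_ge)

lemma rho_le: "n (rho n t) \<le> t + n 1"
proof -
  have "1 \<in> {j. n j \<le> t + n 1}" by simp
  hence ne: "{j. n j \<le> t + n 1} \<noteq> {}" by blast
  have "rho n t \<in> {j. n j \<le> t + n 1}" unfolding rho_def using Max_in[OF fin_rho ne] .
  thus ?thesis by simp
qed

lemma rho_ge1: "1 \<le> rho n t" by (rule rho_ge) simp

lemma ss_pos: "ss n k \<ge> 1"
proof -
  have "0 < rho n (tt n k)" using rho_ge1[of "tt n k"] by simp
  hence "n 0 < n (rho n (tt n k))" using sm by (simp add: strict_mono_less)
  thus ?thesis unfolding ss_def by simp
qed

lemma ss_le: "ss n k \<le> tt n k + n 1" unfolding ss_def by (rule rho_le)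

lemma tt_Suc: "tt n (Suc k) = tt n k + ss n k" by (simp add: ss_def)

lemma tt_sm: "strict_mono (tt n)"
proof (rule strict_monoI_Suc)
  fix k have "ss n k \<ge> 1" by (rule ss_pos)
  thus "tt n k < tt n (Suc k)" unfolding tt_Suc by simp
qed

lemma tt_ge: "k \<le> tt n k" using strict_mono_imp_increasing[OF tt_sm] .

lemma ss_big: "n J \<le> k \<Longrightarrow> J \<le> ss n k"
proof -
  assume "n J \<le> k"
  hence "n J \<le> tt n k + n 1" using tt_ge[of k] by linarith
  hence "J \<le> rho n (tt n k)" by (rule rho_ge)
  also have "\<dots> \<le> ss n k" unfolding ss_def by (rule strict_mono_imp_increasing[OF sm])
  finally show ?thesis .
qed

lemma cover: "\<exists>k. tt n k \<le> m \<and> m < tt n k + ss n k"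
proof (induction m)
  case 0 show ?case using ss_pos[of 0] by (intro exI[of _ 0]) auto
next
  case (Suc m)
  then obtain k where k: "tt n k \<le> m" "m < tt n k + ss n k" by blast
  show ?case
  proof (cases "Suc m < tt n k + ss n k")
    case True thus ?thesis using k by (intro exI[of _ k]) auto
  next
    case False
    hence "Suc m = tt n (Suc k)" using k tt_Suc by simp
    thus ?thesis using ss_pos[of "Suc k"] by (intro exI[of _ "Suc k"]) auto
  qed
qed

lemma sum_ss: "(\<Sum>k\<in>{k. k < m \<and> tt n k < N}. ss n k) \<le> 2 * N + n 1"
proof (induction m)
  case 0 show ?case by simp
next
  case (Suc m)
  show ?case
  proof (cases "tt n m < N")
    case True
    have "\<And>k. k < Suc m \<Longrightarrow> tt n k < N"
      using True tt_sm by (metis le_less_trans less_Suc_eq_le strict_mono_less_eq)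
    hence eq: "{k. k < Suc m \<and> tt n k < N} = {..<Suc m}" by auto
    have "(\<Sum>k<Suc m. ss n k) = tt n (Suc m)"
      by (induction m) (simp_all del: tt.simps add: tt_Suc tt.simps(1))
    also have "\<dots> \<le> 2 * N + n 1" using True tt_Suc[of m] ss_le[of m] by simp
    finally show ?thesis using eq by simp
  next
    case False
    hence "{k. k < Suc m \<and> tt n k < N} = {k. k < m \<and> tt n k < N}"
      using less_Suc_eq by auto
    thus ?thesis using Suc by simp
  qed
qed

end



context fixes n :: "nat \<Rightarrow> nat" assumes sm: "strict_mono n"
begin

lemma card_K_bound:
  fixes J :: nat
  shows "J * card ({k. k < N \<and> tt n k < N} - {..<n J}) \<le> 2 * N + n 1"
proof -
  let ?B = "{k. k < N \<and> tt n k < N} - {..<n J}"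
  have "J * card ?B \<le> (\<Sum>k\<in>?B. ss n k)"
  proof -
    have "\<And>k. k \<in> ?B \<Longrightarrow> J \<le> ss n k" using ss_big[OF sm] by auto
    hence "of_nat (card ?B) * J \<le> (\<Sum>k\<in>?B. ss n k)" by (rule sum_bounded_below)
    thus ?thesis by (simp add: mult.commute)
  qed
  also have "\<dots> \<le> (\<Sum>k\<in>{k. k < N \<and> tt n k < N}. ss n k)"
    by (rule sum_mono2) auto
  also have "\<dots> \<le> 2 * N + n 1" by (rule sum_ss[OF sm])
  finally show ?thesis .
qed

lemma D_dens: "upper_density (range (tt n)) = 0"
  unfolding dens0_iff
proof (intro allI impI)
  fix e :: real assume e: "e > 0"
  define J where "J = nat \<lceil>4/e\<rceil> + 1"
  define K0 where "K0 = n J"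
  have J1: "real J \<ge> 4/e" "J > 0" unfolding J_def by linarith+
  have Jinv: "1 / real J \<le> e/4"
    using J1 e by (simp add: divide_le_eq field_simps)
  define M where "M = nat \<lceil>2 * real K0 / e\<rceil> + n 1"
  show "\<exists>M. \<forall>N\<ge>M. real (card (range (tt n) \<inter> {0..<N})) \<le> e * real N"
  proof (intro exI allI impI)
    fix N assume N: "N \<ge> M"
    let ?K = "{k. k < N \<and> tt n k < N}"
    have fK: "finite ?K" by simp
    have "range (tt n) \<inter> {0..<N} \<subseteq> tt n ` ?K"
    proof
      fix z assume "z \<in> range (tt n) \<inter> {0..<N}"
      then obtain k where "z = tt n k" "tt n k < N" by auto
      moreover have "k < N" using tt_ge[OF sm, of k] \<open>tt n k < N\<close> by linarith
      ultimately show "z \<in> tt n ` ?K" by auto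
    qed
    hence "card (range (tt n) \<inter> {0..<N}) \<le> card (tt n ` ?K)"
      by (intro card_mono) auto
    also have "\<dots> \<le> card ?K" by (rule card_image_le) simp
    also have "\<dots> \<le> card (?K \<inter> {..<K0}) + card (?K - {..<K0})"
    proof -
      have "?K = (?K \<inter> {..<K0}) \<union> (?K - {..<K0})" by blast
      hence "card ?K = card ((?K \<inter> {..<K0}) \<union> (?K - {..<K0}))" by simp
      also have "\<dots> \<le> card (?K \<inter> {..<K0}) + card (?K - {..<K0})" by (rule card_Un_le)
      finally show ?thesis .
    qed
    also have "\<dots> \<le> K0 + card (?K - {..<K0})"
      using card_mono[of "{..<K0}" "?K \<inter> {..<K0}"] by simp
    finally have c1: "real (card (range (tt n) \<inter> {0..<N})) \<le> real K0 + real (card (?K - {..<K0}))"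
      by linarith
    have cb: "J * card (?K - {..<K0}) \<le> 2 * N + n 1" unfolding K0_def by (rule card_K_bound)
    have "real J * real (card (?K - {..<K0})) \<le> 2 * real N + real (n 1)"
      using of_nat_mono[OF cb, where 'a=real] by simp
    hence "real (card (?K - {..<K0})) \<le> (2 * real N + real (n 1)) * (1 / real J)"
      using J1 by (simp add: field_simps)
    also have "\<dots> \<le> (2 * real N + real (n 1)) * (e/4)"
      by (rule mult_left_mono[OF Jinv]) simp
    finally have c2: "real (card (?K - {..<K0})) \<le> e * real N / 2 + e * real (n 1) / 4"
      by (simp add: field_simps)
    have "real N \<ge> 2 * real K0 / e + real (n 1)" using N unfolding M_def by linarith
    hence "e * real N \<ge> e * (2 * real K0 / e + real (n 1))" using e by (simp add: mult_left_mono)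
    moreover have "e * (2 * real K0 / e + real (n 1)) = 2 * real K0 + e * real (n 1)"
      using e by (simp add: field_simps)
    ultimately have "e * real N \<ge> 2 * real K0 + e * real (n 1)" by linarith
    moreover have "e * real (n 1) \<ge> 0" using e by simp
    ultimately show "real (card (range (tt n) \<inter> {0..<N})) \<le> e * real N"
      using c1 c2 by linarith
  qed
qed

end



context fixes n :: "nat \<Rightarrow> nat" assumes sm: "strict_mono n"
begin

lemma hh_inv: "inv (tt n) (tt n k) = k"
  using strict_mono_imp_inj_on[OF tt_sm[OF sm]] by (simp add: inv_f_f)

lemma hh_cases:
  assumes "x \<in> A" "y \<in> A" "hh n x y < N"
  shows "hh n x y \<in> (A \<inter> {0..<N}) \<union>
     (\<Union>k\<in>{k. k < N \<and> tt n k < N}. (\<lambda>x. tt n k + x - ss n k) ` (A \<inter> {ss n k..<2 * ss n k}))"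
proof (cases "tt n (inv (tt n) y) = y \<and> ss n (inv (tt n) y) \<le> x \<and> x < 2 * ss n (inv (tt n) y)")
  case True
  define k where "k = inv (tt n) y"
  have y: "y = tt n k" using True k_def by simp
  have hv: "hh n x y = tt n k + x - ss n k" using True unfolding hh_def k_def[symmetric] Let_def
    by (simp add: y)
  have sx: "ss n k \<le> x" using True k_def by simp
  have "tt n k \<le> hh n x y" using hv sx by arith
  hence "tt n k < N" using assms(3) by linarith
  moreover have "k < N" using tt_ge[OF sm, of k] calculation by linarith
  moreover have "x \<in> A \<inter> {ss n k..<2 * ss n k}" using assms(1) True k_def by simp
  ultimately show ?thesis unfolding hv by blast
next
  case False
  hence "hh n x y = y" unfolding hh_def Let_def by auto
  thus ?thesis using assms by auto
qed

lemma img_dens: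
  assumes A: "upper_density A = 0"
  shows "upper_density (binary_as_finitary (hh n) ` power_set_k A 2) = 0"
  unfolding dens0_iff
proof (intro allI impI)
  fix e :: real assume e: "e > 0"
  let ?F = "binary_as_finitary (hh n) ` power_set_k A 2"
  define d where "d = e / 8"
  have d: "d > 0" using e d_def by simp
  obtain MA where MA: "\<forall>N\<ge>MA. real (card (A \<inter> {0..<N})) \<le> d * real N"
    using A[unfolded dens0_iff] d by blast
  define K0 where "K0 = n MA"
  define C0 where "C0 = (\<Sum>k<K0. ss n k)"
  define M where "M = max MA (nat \<lceil>16 * real C0 / (3 * e)\<rceil> + n 1)"
  show "\<exists>M. \<forall>N\<ge>M. real (card (?F \<inter> {0..<N})) \<le> e * real N"
  proof (intro exI allI impI)
    fix N assume N: "N \<ge> M"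
    let ?K = "{k. k < N \<and> tt n k < N}"
    let ?G = "\<lambda>k. (\<lambda>x. tt n k + x - ss n k) ` (A \<inter> {ss n k..<2 * ss n k})"
    have fK: "finite ?K" by simp
    have sub: "?F \<inter> {0..<N} \<subseteq> (A \<inter> {0..<N}) \<union> (\<Union>k\<in>?K. ?G k)"
    proof
      fix z assume z: "z \<in> ?F \<inter> {0..<N}"
      then obtain xs where xs: "length xs = 2" "set xs \<subseteq> A" "z = hh n (xs ! 0) (xs ! 1)"
        unfolding power_set_k_def binary_as_finitary_def by auto
      have "xs ! 0 \<in> A" "xs ! 1 \<in> A" using xs nth_mem[of 0 xs] nth_mem[of 1 xs] by auto
      thus "z \<in> (A \<inter> {0..<N}) \<union> (\<Union>k\<in>?K. ?G k)" using hh_cases z xs(3) by auto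
    qed
    have i1: "card (?F \<inter> {0..<N}) \<le> card ((A \<inter> {0..<N}) \<union> (\<Union>k\<in>?K. ?G k))"
      by (rule card_mono[OF _ sub]) (auto)
    have i2: "card ((A \<inter> {0..<N}) \<union> (\<Union>k\<in>?K. ?G k)) \<le> card (A \<inter> {0..<N}) + card (\<Union>k\<in>?K. ?G k)" by (rule card_Un_le)
    have i3: "card (\<Union>k\<in>?K. ?G k) \<le> (\<Sum>k\<in>?K. card (?G k))" by (rule card_UN_le[OF fK])
    have i4: "(\<Sum>k\<in>?K. card (?G k)) \<le> (\<Sum>k\<in>?K. card (A \<inter> {ss n k..<2 * ss n k}))"
      by (rule sum_mono) (rule card_image_le, simp)
    have cn: "card (?F \<inter> {0..<N}) \<le> card (A \<inter> {0..<N})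
        + (\<Sum>k\<in>?K. card (A \<inter> {ss n k..<2 * ss n k}))" using i1 i2 i3 i4 by linarith
    have c1: "real (card (?F \<inter> {0..<N})) \<le> real (card (A \<inter> {0..<N}))
        + (\<Sum>k\<in>?K. real (card (A \<inter> {ss n k..<2 * ss n k})))"
      unfolding of_nat_sum[symmetric] of_nat_add[symmetric] of_nat_le_iff by (rule cn)
    define f where "f k = (if k < K0 then ss n k else 0)" for k
    have tm: "real (card (A \<inter> {ss n k..<2 * ss n k})) \<le> 2 * real (f k) + 2 * d * real (ss n k)"
      for k
    proof (cases "k < K0")
      case True
      have "card (A \<inter> {ss n k..<2 * ss n k}) \<le> card {ss n k..<2 * ss n k}"
        by (rule card_mono) auto
      hence "real (card (A \<inter> {ss n k..<2 * ss n k})) \<le> real (ss n k)" by simp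
      moreover have "d * real (ss n k) \<ge> 0" using d by simp
      ultimately show ?thesis using True unfolding f_def by simp
    next
      case False
      hence "MA \<le> ss n k" using ss_big[OF sm, of MA k] K0_def by simp
      hence "2 * ss n k \<ge> MA" by simp
      hence b: "real (card (A \<inter> {0..<2 * ss n k})) \<le> d * real (2 * ss n k)" using MA by blast
      have "card (A \<inter> {ss n k..<2 * ss n k}) \<le> card (A \<inter> {0..<2 * ss n k})"
        by (rule card_mono) auto
      hence "real (card (A \<inter> {ss n k..<2 * ss n k})) \<le> d * real (2 * ss n k)" using b by linarith
      thus ?thesis using False unfolding f_def by simp
    qed
    have "(\<Sum>k\<in>?K. real (card (A \<inter> {ss n k..<2 * ss n k})))
        \<le> (\<Sum>k\<in>?K. 2 * real (f k) + 2 * d * real (ss n k))"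
      by (rule sum_mono) (rule tm)
    also have "\<dots> = 2 * real (\<Sum>k\<in>?K. f k) + 2 * d * real (\<Sum>k\<in>?K. ss n k)"
      by (simp add: sum.distrib sum_distrib_left)
    finally have c2: "(\<Sum>k\<in>?K. real (card (A \<inter> {ss n k..<2 * ss n k})))
        \<le> 2 * real (\<Sum>k\<in>?K. f k) + 2 * d * real (\<Sum>k\<in>?K. ss n k)" .
    have "(\<Sum>k\<in>?K. f k) = (\<Sum>k\<in>{k\<in>?K. k < K0}. ss n k)"
      unfolding f_def by (rule sum.inter_filter[symmetric]) simp
    also have "\<dots> \<le> C0" unfolding C0_def by (rule sum_mono2) auto
    finally have c3: "real (\<Sum>k\<in>?K. f k) \<le> real C0" by (simp only: of_nat_le_iff)
    have "(\<Sum>k\<in>?K. ss n k) \<le> 2 * N + n 1" by (rule sum_ss[OF sm])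
    hence c4: "real (\<Sum>k\<in>?K. ss n k) \<le> 2 * real N + real (n 1)"
      using of_nat_mono[where 'a=real] by fastforce
    have c5: "real (card (A \<inter> {0..<N})) \<le> d * real N" using MA N unfolding M_def by simp
    have "2 * d * real (\<Sum>k\<in>?K. ss n k) \<le> 2 * d * (2 * real N + real (n 1))"
      using c4 d by (intro mult_left_mono) auto
    hence tot: "real (card (?F \<inter> {0..<N})) \<le> d * real N + 2 * real C0 + 2 * d * (2 * real N + real (n 1))"
      using c1 c2 c3 c5 by linarith
    have NN: "real N \<ge> 16 * real C0 / (3 * e) + real (n 1)" using N unfolding M_def by linarith
    hence "3 * e * real N \<ge> 3 * e * (16 * real C0 / (3 * e) + real (n 1))"
      using e by (intro mult_left_mono) auto
    moreover have "3 * e * (16 * real C0 / (3 * e) + real (n 1)) = 16 * real C0 + 3 * e * real (n 1)"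
      using e by (simp add: field_simps)
    ultimately have "3 * e * real N \<ge> 16 * real C0 + 3 * e * real (n 1)" by linarith
    moreover have "e * real (n 1) \<ge> 0" using e by simp
    moreover have "2 * d * (2 * real N + real (n 1)) = 4 * (d * real N) + 2 * (d * real (n 1))"
      by (simp add: algebra_simps)
    moreover have "d * real N = e * real N / 8" "d * real (n 1) = e * real (n 1) / 8"
      unfolding d_def by simp_all
    ultimately show "real (card (?F \<inter> {0..<N})) \<le> e * real N"
      using tot by linarith
  qed
qed

end

theorem mainTheorem11:
  fixes n :: "nat \<Rightarrow> nat"
  assumes "strict_mono n"
  shows "\<exists>D :: nat set. \<exists>h :: nat \<Rightarrow> nat \<Rightarrow> nat.
           upper_density D = 0 \<and>
           in_C_Id0 2 (binary_as_finitary h) \<and>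
           (\<lambda>(x, y). h x y) ` ((\<Union>i. {n i..<2 * n i}) \<times> D) = UNIV"
proof (intro exI conjI)
  show "upper_density (range (tt n)) = 0" by (rule D_dens[OF assms])
  show "in_C_Id0 2 (binary_as_finitary (hh n))"
    unfolding in_C_Id0_def using img_dens[OF assms] by simp
  show "(\<lambda>(x, y). hh n x y) ` ((\<Union>i. {n i..<2 * n i}) \<times> range (tt n)) = UNIV"
  proof (rule antisym)
    show "UNIV \<subseteq> (\<lambda>(x, y). hh n x y) ` ((\<Union>i. {n i..<2 * n i}) \<times> range (tt n))"
    proof
      fix m :: nat
      obtain k where k: "tt n k \<le> m" "m < tt n k + ss n k" using cover[OF assms] by blast
      define x where "x = ss n k + (m - tt n k)"
      have x1: "x \<in> {n (rho n (tt n k))..<2 * n (rho n (tt n k))}"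
        using k unfolding x_def ss_def by auto
      have "hh n x (tt n k) = m" using k unfolding hh_def Let_def hh_inv[OF assms] x_def by auto
      moreover have "(x, tt n k) \<in> (\<Union>i. {n i..<2 * n i}) \<times> range (tt n)" using x1 by blast
      ultimately show "m \<in> (\<lambda>(x, y). hh n x y) ` ((\<Union>i. {n i..<2 * n i}) \<times> range (tt n))"
        by (metis (no_types, lifting) case_prod_conv image_eqI)
    qed
  qed simp
qed


end
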